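(* Let $f:\mathbb{R}^n\to\mathbb{R}$ be differentiable and pseudo-convex, with $\nabla f$ $L$-Lipschitz continuous, and assume the stationary set $X^*$ is non-empty. Then the sequence $\{x^k\}$ generated by Algorithm 2 (run without stopping, with $\nabla f(x^k)\ne0$ for all $k$) converges to a point of $X^*$.
   Context: Pseudo-convex: $\nabla f$ pseudo-monotone, i.e. $\langle \nabla f(x),y-x\rangle\ge0\Rightarrow\langle\nabla f(y),y-x\rangle\ge0$ for all $x,y$. $X^*=\{x:\nabla f(x)=0\}$. Algorithm 2: parameters $0<\mu<\nu<1$, $0<\underline{h}<1\le\gamma_0^0\le\overline{h}$, $\theta\in(0,1)$, $\tau>1$, $\beta\in\left(\frac{1-\sqrt{1-\nu^2}}{\nu^2},1\right]$, starting point $x^0$. At iteration $k$: for $\gamma>0$ let $z^k(\gamma)=x^k-\gamma\nabla f(x^k)$ and $r_k(\gamma)=\gamma\|\nabla f(z^k(\gamma))-\nabla f(x^k)\|/\|z^k(\gamma)-x^k\|$; starting from $\gamma_0^k$, while $r_k(\gamma_l^k)>\nu$ set $\gamma_{l+1}^k=\gamma_l^k\theta\min\{1,1/r_k(\gamma_l^k)\}$; let $h_k$ be the first $\gamma_l^k$ with $r_k(\gamma_l^k)\le\nu$. Then $z^k=x^k-h_k\nabla f(x^k)$, $x^{k+1}=x^k-h_k\big(\nabla f(x^k)-\beta(\nabla f(x^k)-\nabla f(z^k))\big)$, and $\gamma_0^{k+1}=\mathbf{P}_{[\underline{h},\overline{h}]}(\tau h_k)$ if $r_k(h_k)\le\mu$,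 else $\gamma_0^{k+1}=\mathbf{P}_{[\underline{h},\overline{h}]}(h_k)$, where $\mathbf{P}_{[a,b]}$ is projection onto $[a,b]$. *)

theory Defs
  imports "HOL-Analysis.Analysis"
begin

definition zpt :: "('a::real_normed_vector \<Rightarrow> 'a) \<Rightarrow> 'a \<Rightarrow> real \<Rightarrow> 'a" where
  "zpt g x \<gamma> = x - \<gamma> *\<^sub>R g x"

definition ratio :: "('a::real_normed_vector \<Rightarrow> 'a) \<Rightarrow> 'a \<Rightarrow> real \<Rightarrow> real" where
  "ratio g x \<gamma> = \<gamma> * norm (g (zpt g x \<gamma>) - g x) / norm (zpt g x \<gamma> - x)"

fun bt :: "('a::real_normed_vector \<Rightarrow> 'a) \<Rightarrow> real \<Rightarrow> real \<Rightarrow> 'a \<Rightarrow> real \<Rightarrow> nat \<Rightarrow> real" where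
  "bt g \<nu> \<theta> x \<gamma>0 0 = \<gamma>0"
| "bt g \<nu> \<theta> x \<gamma>0 (Suc l) =
     (let \<gamma> = bt g \<nu> \<theta> x \<gamma>0 l; r = ratio g x \<gamma>
      in if r > \<nu> then \<gamma> * \<theta> * min 1 (1 / r) else \<gamma>)"

definition proj :: "real \<Rightarrow> real \<Rightarrow> real \<Rightarrow> real" where
  "proj a b t = max a (min b t)"

text \<open>The sequences x (iterates), gam0 (initial trial steps gamma_0^k) and h (accepted steps h_k)
  are generated by Algorithm 2 with gradient g, parameters mu nu hlo hup theta tau beta, start x0.\<close>
definition alg2 ::
  "('a::real_normed_vector \<Rightarrow> 'a) \<Rightarrow> real \<Rightarrow> real \<Rightarrow> real \<Rightarrow> real \<Rightarrow> real \<Rightarrow> real \<Rightarrow> real \<Rightarrow> 'a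
   \<Rightarrow> (nat \<Rightarrow> 'a) \<Rightarrow> (nat \<Rightarrow> real) \<Rightarrow> (nat \<Rightarrow> real) \<Rightarrow> bool" where
  "alg2 g \<mu> \<nu> hlo hup \<theta> \<tau> \<beta> x0 x gam0 h \<longleftrightarrow>
     x 0 = x0 \<and>
     (\<forall>k. (\<exists>l. h k = bt g \<nu> \<theta> (x k) (gam0 k) l \<and> ratio g (x k) (h k) \<le> \<nu> \<and>
                 (\<forall>j<l. ratio g (x k) (bt g \<nu> \<theta> (x k) (gam0 k) j) > \<nu>)) \<and>
          x (Suc k) = x k - h k *\<^sub>R (g (x k) - \<beta> *\<^sub>R (g (x k) - g (zpt g (x k) (h k)))) \<and>
          gam0 (Suc k) = (if ratio g (x k) (h k) \<le> \<mu> then proj hlo hup (\<tau> * h k)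
                          else proj hlo hup (h k)))"

end

theory Submission
  imports Defs
begin

lemma key_ineq:
  fixes a e w :: "'a::real_inner"
  assumes h1: "e \<bullet> a \<ge> 0" and h2: "(e + w) \<bullet> (a - e) \<ge> 0"
    and h3: "norm w \<le> \<nu> * norm e" and b0: "0 \<le> \<beta>" and b1: "\<beta> \<le> 1" and n0: "0 \<le> \<nu>"
  shows "(norm (a - (e + \<beta> *\<^sub>R w)))\<^sup>2 \<le> (norm a)\<^sup>2 - (2*\<beta> - 1 - \<beta>\<^sup>2*\<nu>\<^sup>2) * (norm e)\<^sup>2"
proof -
  have ex: "(norm (a - (e + \<beta> *\<^sub>R w)))\<^sup>2 = a\<bullet>a - 2*(e\<bullet>a) - 2*\<beta>*(w\<bullet>a) + e\<bullet>e + 2*\<beta>*(e\<bullet>w) + \<beta>\<^sup>2*(w\<bullet>w)"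
    unfolding power2_norm_eq_inner by (simp add: inner_diff inner_add algebra_simps inner_commute power2_eq_square)
  have h2': "e\<bullet>a + w\<bullet>a \<ge> e\<bullet>e + e\<bullet>w"
    using h2 by (simp add: inner_diff inner_add algebra_simps inner_commute)
  have "\<beta>*(e\<bullet>a + w\<bullet>a) \<ge> \<beta>*(e\<bullet>e + e\<bullet>w)" using mult_left_mono[OF h2' b0] .
  moreover have "(1-\<beta>)*(e\<bullet>a) \<ge> 0" using h1 b1 by simp
  moreover have "(norm w)\<^sup>2 \<le> (\<nu> * norm e)\<^sup>2" using h3 by (simp add: power_mono)
  hence "\<beta>\<^sup>2*(w\<bullet>w) \<le> \<beta>\<^sup>2*(\<nu>\<^sup>2 * (e\<bullet>e))"
    by (intro mult_left_mono) (auto simp: power2_norm_eq_inner power_mult_distrib)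
  ultimately show ?thesis unfolding ex
    by (simp add: power2_norm_eq_inner algebra_simps)
qed

lemma cpos:
  fixes \<nu> \<beta> :: real
  assumes "0 < \<nu>" "\<nu> < 1" "(1 - sqrt (1 - \<nu>\<^sup>2)) / \<nu>\<^sup>2 < \<beta>" "\<beta> \<le> 1"
  shows "2*\<beta> - 1 - \<beta>\<^sup>2*\<nu>\<^sup>2 > 0"
proof -
  define s where "s = sqrt (1 - \<nu>\<^sup>2)"
  define t where "t = \<nu>\<^sup>2 * \<beta>"
  have "\<nu>\<^sup>2 < 1\<^sup>2" using assms by (intro power_strict_mono) auto
  hence n2: "0 < \<nu>\<^sup>2" "\<nu>\<^sup>2 < 1" using assms by auto
  have "0 \<le> 1 - \<nu>\<^sup>2" using n2 by simp
  hence ss: "s\<^sup>2 = 1 - \<nu>\<^sup>2" unfolding s_def by (rule real_sqrt_pow2)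
  have a3: "(1 - s) / \<nu>\<^sup>2 < \<beta>" using assms(3) unfolding s_def .
  have "1 - s < \<beta> * \<nu>\<^sup>2" using a3 n2(1) by (simp only: pos_divide_less_eq)
  hence t1: "1 - s < t" unfolding t_def by (simp only: mult.commute)
  have "\<nu>\<^sup>2 * \<beta> \<le> \<nu>\<^sup>2 * 1" using n2(1) assms(4) by (intro mult_left_mono) auto
  hence t2: "t < 1" unfolding t_def using n2 by linarith
  have "(1 - t)\<^sup>2 < s\<^sup>2" using t1 t2 by (intro power_strict_mono) auto
  moreover have "\<nu>\<^sup>2 * (2*\<beta> - 1 - \<beta>\<^sup>2*\<nu>\<^sup>2) = (1 - \<nu>\<^sup>2) - (1 - t)\<^sup>2"
    unfolding t_def by (simp add: power2_eq_square algebra_simps)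
  ultimately have "\<nu>\<^sup>2 * (2*\<beta> - 1 - \<beta>\<^sup>2*\<nu>\<^sup>2) > 0" using ss by linarith
  thus ?thesis using n2 by (simp add: zero_less_mult_iff)
qed

lemma bt_pos:
  assumes "\<gamma>0 > 0" "\<nu> > 0" "\<theta> > 0"
  shows "bt g \<nu> \<theta> x \<gamma>0 l > 0"
  using assms by (induction l) (auto simp: Let_def)

lemma ratio_le:
  fixes g :: "'a::real_normed_vector \<Rightarrow> 'a"
  assumes lip: "\<And>y z. norm (g y - g z) \<le> L * norm (y - z)" and L: "L > 0" and "\<gamma> \<ge> 0"
  shows "ratio g x \<gamma> \<le> \<gamma> * L"
proof (cases "norm (zpt g x \<gamma> - x) = 0")
  case True thus ?thesis unfolding ratio_def using L assms(3) by simp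
next
  case False
  hence p: "norm (zpt g x \<gamma> - x) > 0" by simp
  have "\<gamma> * norm (g (zpt g x \<gamma>) - g x) \<le> \<gamma> * (L * norm (zpt g x \<gamma> - x))"
    using lip assms(3) by (intro mult_left_mono) auto
  thus ?thesis unfolding ratio_def using p by (simp add: divide_le_eq)
qed

lemma step_low:
  fixes r \<gamma> \<theta> \<nu> L :: real
  assumes "r \<le> \<gamma> * L" "r > \<nu>" "\<nu> > 0" "\<nu> < 1" "\<theta> > 0" "L > 0" "\<gamma> > 0"
  shows "\<gamma> * \<theta> * min 1 (1 / r) \<ge> \<theta> * \<nu> / L"
proof (cases "r \<le> 1")
  case True
  have "\<nu> / L \<le> \<gamma>" using assms by (simp add: divide_le_eq)
  hence "\<theta> * (\<nu> / L) \<le> \<theta> * \<gamma>" using assms by (intro mult_left_mono) auto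
  moreover have "\<theta> * \<nu> / L = \<theta> * (\<nu> / L)" by simp
  moreover have "min 1 (1 / r) = 1" using True assms by simp
  ultimately show ?thesis by (simp add: mult.commute)
next
  case False
  have "1 / L \<le> \<gamma> / r" using assms False by (simp add: divide_le_eq le_divide_eq mult.commute)
  moreover have "\<nu> / L \<le> 1 / L" using assms by (simp add: divide_right_mono)
  ultimately have "\<theta> * (\<nu> / L) \<le> \<theta> * (\<gamma> / r)" using assms by (intro mult_left_mono) auto
  moreover have "min 1 (1 / r) = 1 / r" using False by simp
  moreover have "\<gamma> * \<theta> * (1 / r) = \<theta> * (\<gamma> / r)" by simp
  moreover have "\<theta> * \<nu> / L = \<theta> * (\<nu> / L)" by simp
  ultimately show ?thesis by metis
qed

theorem theorem3:
  fixes f :: "real ^ 'n \<Rightarrow> real" and g :: "real ^ 'n \<Rightarrow> real ^ 'n"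
    and L \<mu> \<nu> hlo hup \<theta> \<tau> \<beta> :: real and x0 :: "real ^ 'n"
    and x :: "nat \<Rightarrow> real ^ 'n" and gam0 h :: "nat \<Rightarrow> real"
  assumes grad: "\<And>y. (f has_derivative (\<lambda>v. g y \<bullet> v)) (at y)"
    and pseudo: "\<And>y z. g y \<bullet> (z - y) \<ge> 0 \<Longrightarrow> g z \<bullet> (z - y) \<ge> 0"
    and lip: "\<And>y z. norm (g y - g z) \<le> L * norm (y - z)"
    and nonempty: "{y. g y = 0} \<noteq> {}"
    and params: "0 < \<mu>" "\<mu> < \<nu>" "\<nu> < 1" "0 < hlo" "hlo < 1" "1 \<le> gam0 0" "gam0 0 \<le> hup"
      "0 < \<theta>" "\<theta> < 1" "\<tau> > 1"
      "(1 - sqrt (1 - \<nu>\<^sup>2)) / \<nu>\<^sup>2 < \<beta>" "\<beta> \<le> 1"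
    and run: "alg2 g \<mu> \<nu> hlo hup \<theta> \<tau> \<beta> x0 x gam0 h"
    and nonstat: "\<And>k. g (x k) \<noteq> 0"
  shows "\<exists>xs. g xs = 0 \<and> x \<longlonglongrightarrow> xs"
proof -
  obtain p0 where p0: "g p0 = 0" using nonempty by auto
  have Lpos: "L > 0"
  proof (rule ccontr)
    assume "\<not> L > 0"
    hence "norm (g (x 0) - g p0) \<le> 0" using lip[of "x 0" p0]
      by (meson mult_nonpos_nonneg norm_ge_zero not_le order_trans)
    thus False using p0 nonstat[of 0] by simp
  qed
  have nu0: "\<nu> > 0" using params by simp
  have b0: "\<beta> \<ge> 0"
  proof -
    have "0 \<le> (1 - sqrt (1 - \<nu>\<^sup>2)) / \<nu>\<^sup>2"
      using params by (intro divide_nonneg_nonneg) (auto simp: real_sqrt_le_1_iff)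
    thus ?thesis using params by linarith
  qed
  define c where "c = 2*\<beta> - 1 - \<beta>\<^sup>2*\<nu>\<^sup>2"
  have cpos: "c > 0" unfolding c_def using cpos params by simp
  define hm where "hm = min hlo (\<theta> * \<nu> / L)"
  have hm0: "hm > 0" unfolding hm_def using params Lpos by simp
  have gam_lo: "gam0 k \<ge> hlo" for k
  proof (cases k)
    case 0 thus ?thesis using params by simp
  next
    case (Suc j) thus ?thesis using run unfolding alg2_def proj_def by auto
  qed
  have step: "x (Suc k) = x k - h k *\<^sub>R (g (x k) - \<beta> *\<^sub>R (g (x k) - g (zpt g (x k) (h k))))"
    and rat: "ratio g (x k) (h k) \<le> \<nu>" for k
    using run unfolding alg2_def by blast+
  have hlow: "h k \<ge> hm" for k
  proof -
    obtain l where l: "h k = bt g \<nu> \<theta> (x k) (gam0 k) l"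
      "\<forall>j<l. ratio g (x k) (bt g \<nu> \<theta> (x k) (gam0 k) j) > \<nu>"
      using run unfolding alg2_def by blast
    show ?thesis
    proof (cases l)
      case 0 thus ?thesis using l gam_lo[of k] unfolding hm_def by simp
    next
      case (Suc j)
      define \<gamma> where "\<gamma> = bt g \<nu> \<theta> (x k) (gam0 k) j"
      have gp: "\<gamma> > 0" unfolding \<gamma>_def 
        using bt_pos[of "gam0 k" \<nu> \<theta> g "x k" j] gam_lo[of k] params(4,8) nu0 by linarith
      have rg: "ratio g (x k) \<gamma> > \<nu>" using l Suc unfolding \<gamma>_def by simp
      have hk: "h k = \<gamma> * \<theta> * min 1 (1 / ratio g (x k) \<gamma>)"
        using l Suc rg unfolding \<gamma>_def by (simp add: Let_def)
      have "h k \<ge> \<theta> * \<nu> / L" unfolding hk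
        using step_low[OF ratio_le[OF lip Lpos, of \<gamma>] rg nu0 params(3) params(8) Lpos gp] gp by simp
      thus ?thesis unfolding hm_def by simp
    qed
  qed
  have hpos: "h k > 0" for k using hlow[of k] hm0 by simp
  have fejer: "(norm (x (Suc k) - p))\<^sup>2 \<le> (norm (x k - p))\<^sup>2 - c * (norm (h k *\<^sub>R g (x k)))\<^sup>2"
    if gp: "g p = 0" for p k
  proof -
    define a where "a = x k - p"
    define e where "e = h k *\<^sub>R g (x k)"
    define z where "z = zpt g (x k) (h k)"
    define w where "w = h k *\<^sub>R (g z - g (x k))"
    have zx: "z = x k - e" unfolding z_def e_def zpt_def by simp
    have e1: "g (x k) \<bullet> (x k - p) \<ge> 0"
      using pseudo[of p "x k"] gp by simp
    have h1: "e \<bullet> a \<ge> 0" unfolding e_def a_def using e1 hpos[of k] by simp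
    have e2: "g z \<bullet> (z - p) \<ge> 0" using pseudo[of p z] gp by simp
    have "e + w = h k *\<^sub>R g z" unfolding e_def w_def by (simp add: algebra_simps)
    hence "(e + w) \<bullet> (a - e) = h k * (g z \<bullet> (z - p))" unfolding a_def zx by (simp add: algebra_simps)
    hence h2: "(e + w) \<bullet> (a - e) \<ge> 0" using e2 hpos[of k] by simp
    have ne: "norm e > 0" unfolding e_def using hpos[of k] nonstat[of k] by simp
    have "ratio g (x k) (h k) = norm w / norm e"
      unfolding ratio_def w_def z_def[symmetric] zx using hpos[of k] by simp
    hence h3: "norm w \<le> \<nu> * norm e" using rat[of k] ne by (simp add: divide_le_eq)
    have eq: "x (Suc k) - p = a - (e + \<beta> *\<^sub>R w)"
      unfolding step a_def e_def w_def z_def by (simp add: algebra_simps)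
    have K: "(norm (a - (e + \<beta> *\<^sub>R w)))\<^sup>2 \<le> (norm a)\<^sup>2 - c * (norm e)\<^sup>2"
      using key_ineq[OF h1 h2 h3 b0 params(12)] nu0 unfolding c_def by simp
    show ?thesis unfolding eq a_def[symmetric] e_def[symmetric] using K .
  qed
  have mono: "norm (x (Suc k) - p) \<le> norm (x k - p)" if gp: "g p = 0" for p k
  proof -
    have "(norm (x (Suc k) - p))\<^sup>2 \<le> (norm (x k - p))\<^sup>2"
      using fejer[OF gp, of k] cpos by (smt (verit) mult_nonneg_nonneg zero_le_power2)
    thus ?thesis by (simp add: power2_le_iff_abs_le)
  qed
  have dec: "decseq (\<lambda>k. norm (x k - p))" if gp: "g p = 0" for p
    by (rule decseq_SucI) (rule mono[OF gp])
  obtain D where D: "(\<lambda>k. norm (x k - p0)) \<longlonglongrightarrow> D"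
    using decseq_convergent[OF dec[OF p0], of 0] by auto
  have D2: "(\<lambda>k. (norm (x k - p0))\<^sup>2 - (norm (x (Suc k) - p0))\<^sup>2) \<longlonglongrightarrow> D\<^sup>2 - D\<^sup>2"
    by (intro tendsto_intros D LIMSEQ_Suc[OF D])
  define A where "A = c * hm\<^sup>2"
  have A0: "A > 0" unfolding A_def using cpos hm0 by simp
  have gbound: "A * (norm (g (x k)))\<^sup>2 \<le> (norm (x k - p0))\<^sup>2 - (norm (x (Suc k) - p0))\<^sup>2" for k
  proof -
    have "hm\<^sup>2 \<le> (h k)\<^sup>2" using hlow[of k] hm0 by (intro power_mono) auto
    hence "c * hm\<^sup>2 \<le> c * (h k)\<^sup>2" using cpos by (intro mult_left_mono) auto
    hence "c * hm\<^sup>2 * (norm (g (x k)))\<^sup>2 \<le> c * (h k)\<^sup>2 * (norm (g (x k)))\<^sup>2"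
      by (intro mult_right_mono) auto
    also have "\<dots> = c * (norm (h k *\<^sub>R g (x k)))\<^sup>2" using hpos[of k]
      by (simp add: power_mult_distrib)
    finally show ?thesis using fejer[OF p0, of k] unfolding A_def by linarith
  qed
  have gb2: "(norm (g (x k)))\<^sup>2 \<le> ((norm (x k - p0))\<^sup>2 - (norm (x (Suc k) - p0))\<^sup>2) / A" for k
    using gbound[of k] A0 by (simp add: le_divide_eq mult.commute)
  have D3: "(\<lambda>k. ((norm (x k - p0))\<^sup>2 - (norm (x (Suc k) - p0))\<^sup>2) / A) \<longlonglongrightarrow> (D\<^sup>2 - D\<^sup>2) / A"
    by (intro tendsto_divide D2 tendsto_const) (use A0 in simp)
  have "(\<lambda>k. (norm (g (x k)))\<^sup>2) \<longlonglongrightarrow> 0"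
  proof (rule tendsto_sandwich[OF _ _ tendsto_const])
    show "\<forall>\<^sub>F k in sequentially. 0 \<le> (norm (g (x k)))\<^sup>2" by simp
    show "\<forall>\<^sub>F k in sequentially. (norm (g (x k)))\<^sup>2 \<le> ((norm (x k - p0))\<^sup>2 - (norm (x (Suc k) - p0))\<^sup>2) / A"
      using gb2 by simp
    show "(\<lambda>k. ((norm (x k - p0))\<^sup>2 - (norm (x (Suc k) - p0))\<^sup>2) / A) \<longlonglongrightarrow> 0"
      using D3 by simp
  qed
  hence "(\<lambda>k. sqrt ((norm (g (x k)))\<^sup>2)) \<longlonglongrightarrow> sqrt 0" by (intro tendsto_intros)
  hence "(\<lambda>k. norm (g (x k))) \<longlonglongrightarrow> 0" by simp
  hence g0: "(\<lambda>k. g (x k)) \<longlonglongrightarrow> 0" by (simp add: tendsto_norm_zero_iff)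
  have bnd: "\<forall>k. x k \<in> cball p0 (norm (x 0 - p0))" for k
    using decseqD[OF dec[OF p0], of 0] by (simp add: dist_norm norm_minus_commute)
  obtain xb r where r: "strict_mono (r :: nat \<Rightarrow> nat)" "(x \<circ> r) \<longlonglongrightarrow> xb"
    using seq_compactE[OF compact_imp_seq_compact[OF compact_cball] ] bnd by blast
  have contg: "continuous_on UNIV g"
    by (rule lipschitz_on_continuous_on[of L UNIV]) (auto simp: lipschitz_on_def dist_norm lip Lpos less_imp_le)
  have "((g \<circ> (x \<circ> r))) \<longlonglongrightarrow> g xb"
    using r(2) contg unfolding o_def by (intro continuous_on_tendsto_compose[of UNIV g]) auto
  moreover have "((g \<circ> (x \<circ> r))) \<longlonglongrightarrow> 0"
    using LIMSEQ_subseq_LIMSEQ[OF g0 r(1)] by (simp add: o_def)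
  ultimately have gxb: "g xb = 0" using LIMSEQ_unique by blast
  have "x \<longlonglongrightarrow> xb"
  proof (rule LIMSEQ_I)
    fix \<epsilon> :: real assume "\<epsilon> > 0"
    then obtain j where j: "norm ((x \<circ> r) j - xb) < \<epsilon>" using LIMSEQ_D[OF r(2)] by blast
    show "\<exists>no. \<forall>n\<ge>no. norm (x n - xb) < \<epsilon>"
    proof (intro exI allI impI)
      fix n assume "r j \<le> n"
      thus "norm (x n - xb) < \<epsilon>" using decseqD[OF dec[OF gxb], of "r j" n] j by simp
    qed
  qed
  thus ?thesis using gxb by blast
qed

end
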